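(* Every countably infinite, connected, vertex-transitive graph (vertex degrees not necessarily finite) has a perfect matching.
   Context: A perfect matching of a graph is a set of pairwise disjoint edges, none a loop, covering every vertex. *)

theory Defs
  imports Main "HOL-Library.Countable_Set"
begin

text \<open>A graph is given by a vertex set V and a symmetric adjacency relation E
  whose edges lie inside V. Loops (E v v) are permitted; they play no role.\<close>

definition graph :: "'a set \<Rightarrow> ('a \<Rightarrow> 'a \<Rightarrow> bool) \<Rightarrow> bool" where
  "graph V E \<longleftrightarrow> (\<forall>u v. E u v \<longrightarrow> u \<in> V \<and> v \<in> V) \<and> (\<forall>u v. E u v \<longrightarrow> E v u)"

definition connected_graph :: "'a set \<Rightarrow> ('a \<Rightarrow> 'a \<Rightarrow> bool) \<Rightarrow> bool" where
  "connected_graph V E \<longleftrightarrow> (\<forall>u\<in>V. \<forall>v\<in>V. E\<^sup>*\<^sup>* u v)"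

definition graph_automorphism :: "'a set \<Rightarrow> ('a \<Rightarrow> 'a \<Rightarrow> bool) \<Rightarrow> ('a \<Rightarrow> 'a) \<Rightarrow> bool" where
  "graph_automorphism V E f \<longleftrightarrow> bij_betw f V V \<and> (\<forall>u\<in>V. \<forall>v\<in>V. E (f u) (f v) \<longleftrightarrow> E u v)"

definition vertex_transitive :: "'a set \<Rightarrow> ('a \<Rightarrow> 'a \<Rightarrow> bool) \<Rightarrow> bool" where
  "vertex_transitive V E \<longleftrightarrow> (\<forall>u\<in>V. \<forall>v\<in>V. \<exists>f. graph_automorphism V E f \<and> f u = v)"

definition perfect_matching :: "'a set \<Rightarrow> ('a \<Rightarrow> 'a \<Rightarrow> bool) \<Rightarrow> 'a set set \<Rightarrow> bool" where
  "perfect_matching V E M \<longleftrightarrow>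
     (\<forall>e\<in>M. \<exists>u v. e = {u, v} \<and> u \<noteq> v \<and> E u v) \<and>
     (\<forall>e1\<in>M. \<forall>e2\<in>M. e1 \<noteq> e2 \<longrightarrow> e1 \<inter> e2 = {}) \<and>
     (\<forall>v\<in>V. \<exists>e\<in>M. v \<in> e)"

end

theory Submission
  imports Defs
begin

definition sgraph :: "'a set \<Rightarrow> ('a \<Rightarrow> 'a \<Rightarrow> bool) \<Rightarrow> bool" where
  "sgraph X R \<longleftrightarrow> (\<forall>u v. R u v \<longrightarrow> u \<in> X \<and> v \<in> X \<and> u \<noteq> v \<and> R v u)"

definition ipm :: "'a set \<Rightarrow> ('a \<Rightarrow> 'a \<Rightarrow> bool) \<Rightarrow> ('a \<Rightarrow> 'a) \<Rightarrow> bool" where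
  "ipm X R p \<longleftrightarrow> (\<forall>x\<in>X. p x \<in> X \<and> p x \<noteq> x \<and> p (p x) = x \<and> R x (p x))"

definition rin :: "'a set \<Rightarrow> ('a \<Rightarrow> 'a \<Rightarrow> bool) \<Rightarrow> 'a \<Rightarrow> 'a \<Rightarrow> bool" where
  "rin Y R u v \<longleftrightarrow> R u v \<and> u \<in> Y \<and> v \<in> Y"

definition gcomp :: "'a set \<Rightarrow> ('a \<Rightarrow> 'a \<Rightarrow> bool) \<Rightarrow> 'a \<Rightarrow> 'a set" where
  "gcomp Y R x = {y. (rin Y R)\<^sup>*\<^sup>* x y}"

definition comps :: "'a set \<Rightarrow> ('a \<Rightarrow> 'a \<Rightarrow> bool) \<Rightarrow> 'a set set" where
  "comps Y R = gcomp Y R ` Y"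

definition oddc :: "'a set \<Rightarrow> ('a \<Rightarrow> 'a \<Rightarrow> bool) \<Rightarrow> 'a set set" where
  "oddc Y R = {C \<in> comps Y R. odd (card C)}"

definition tutte :: "'a set \<Rightarrow> ('a \<Rightarrow> 'a \<Rightarrow> bool) \<Rightarrow> bool" where
  "tutte X R \<longleftrightarrow> (\<forall>S\<subseteq>X. card (oddc (X - S) R) \<le> card S)"

lemma comp_self: "x \<in> Y \<Longrightarrow> x \<in> gcomp Y R x"
  by (simp add: gcomp_def)

lemma comp_sub: "x \<in> Y \<Longrightarrow> gcomp Y R x \<subseteq> Y"
proof
  fix y assume "x \<in> Y" "y \<in> gcomp Y R x"
  then have "(rin Y R)\<^sup>*\<^sup>* x y" by (simp add: gcomp_def)
  then show "y \<in> Y" using \<open>x \<in> Y\<close> by (induction rule: rtranclp_induct) (auto simp: rin_def)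
qed

lemma rin_sym: "symp R \<Longrightarrow> rin Y R u v \<Longrightarrow> rin Y R v u"
  by (auto simp: rin_def dest: sympD)

lemma rtranclp_sym:
  assumes "\<And>u v. Q u v \<Longrightarrow> Q v u" "Q\<^sup>*\<^sup>* a b" shows "Q\<^sup>*\<^sup>* b a"
  using assms(2)
proof (induction rule: rtranclp_induct)
  case base then show ?case by simp
next
  case (step y z)
  have "Q z y" using assms(1) step(2) .
  then show ?case using step(3) by (rule converse_rtranclp_into_rtranclp)
qed

lemma comp_eq:
  assumes sym: "symp R" and "y \<in> gcomp Y R x"
  shows "gcomp Y R y = gcomp Y R x"
proof -
  have xy: "(rin Y R)\<^sup>*\<^sup>* x y" using assms(2) by (simp add: gcomp_def)
  have yx: "(rin Y R)\<^sup>*\<^sup>* y x" by (rule rtranclp_sym[OF _ xy]) (rule rin_sym[OF sym])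
  show ?thesis unfolding gcomp_def using xy yx by (auto intro: rtranclp_trans)
qed

lemma comps_disjoint:
  assumes sym: "symp R"
    and "C1 \<in> comps Y R" "C2 \<in> comps Y R" "C1 \<inter> C2 \<noteq> {}"
  shows "C1 = C2"
proof -
  obtain x1 where x1: "C1 = gcomp Y R x1" using assms(2) by (auto simp: comps_def)
  obtain x2 where x2: "C2 = gcomp Y R x2" using assms(3) by (auto simp: comps_def)
  obtain y where y1: "y \<in> C1" and y2: "y \<in> C2" using assms(4) by auto
  have e1: "gcomp Y R y = gcomp Y R x1" using comp_eq[OF sym] y1 x1 by blast
  have e2: "gcomp Y R y = gcomp Y R x2" using comp_eq[OF sym] y2 x2 by blast
  show ?thesis using e1 e2 x1 x2 by simp
qed

lemma comps_Union: "\<Union>(comps Y R) = Y"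
  using comp_self comp_sub by (fastforce simp: comps_def)

lemma comps_nonempty: "C \<in> comps Y R \<Longrightarrow> C \<noteq> {}"
  using comp_self by (fastforce simp: comps_def)

lemma comps_sub: "C \<in> comps Y R \<Longrightarrow> C \<subseteq> Y"
  using comp_sub by (fastforce simp: comps_def)

lemma comps_finite: "finite Y \<Longrightarrow> finite (comps Y R)"
  by (simp add: comps_def)

lemma card_comps_sum:
  assumes sym: "symp R" and fin: "finite Y"
  shows "card Y = (\<Sum>C\<in>comps Y R. card C)"
proof -
  have pw: "pairwise disjnt (comps Y R)"
    unfolding pairwise_def disjnt_def using comps_disjoint[OF sym] by blast
  have fc: "\<And>C. C \<in> comps Y R \<Longrightarrow> finite C"
    by (meson comps_sub fin finite_subset)
  have "card (\<Union>(comps Y R)) = sum card (comps Y R)"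
    by (rule card_Union_disjoint[OF pw fc])
  then show ?thesis by (simp only: comps_Union)
qed

lemma parity_comps:
  assumes sym: "symp R" and fin: "finite Y"
  shows "even (card Y) \<longleftrightarrow> even (card (oddc Y R))"
proof -
  have "even (sum card (comps Y R)) \<longleftrightarrow> even (card {C \<in> comps Y R. odd (card C)})"
    by (rule even_sum_iff[OF comps_finite[OF fin]])
  then show ?thesis using card_comps_sum[OF sym fin] unfolding oddc_def by simp
qed

lemma gcomp_mono:
  assumes "\<And>u v. R u v \<Longrightarrow> R' u v" "y \<in> gcomp Y R x"
  shows "y \<in> gcomp Y R' x"
proof -
  have "(rin Y R)\<^sup>*\<^sup>* x y" using assms(2) by (simp add: gcomp_def)
  then have "(rin Y R')\<^sup>*\<^sup>* x y"
    by (rule rtranclp_mono[THEN predicate2D, rotated]) (auto simp: rin_def assms(1))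
  then show ?thesis by (simp add: gcomp_def)
qed

lemma oddc_mono:
  assumes sym: "symp R" and sym': "symp R'" and mono: "\<And>u v. R u v \<Longrightarrow> R' u v"
    and fin: "finite Y"
  shows "card (oddc Y R') \<le> card (oddc Y R)"
proof -
  have ex: "\<exists>D. D \<in> oddc Y R \<and> D \<subseteq> C" if C: "C \<in> oddc Y R'" for C
  proof -
    obtain x where x: "x \<in> Y" "C = gcomp Y R' x" using C by (auto simp: oddc_def comps_def)
    have CY: "C \<subseteq> Y" using x comp_sub by metis
    let ?D = "{D \<in> comps Y R. D \<subseteq> C}"
    have sub: "D \<subseteq> C" if DR: "D \<in> comps Y R" and DC: "D \<inter> C \<noteq> {}" for D
    proof
      fix z assume z: "z \<in> D"
      obtain y where y: "y \<in> D" "y \<in> C" using DC by auto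
      obtain a where a: "a \<in> Y" "D = gcomp Y R a" using DR by (auto simp: comps_def)
      have "gcomp Y R y = D" using comp_eq[OF sym] y a by blast
      then have "z \<in> gcomp Y R y" using z by simp
      then have "z \<in> gcomp Y R' y" using gcomp_mono mono by metis
      moreover have "gcomp Y R' y = C" using comp_eq[OF sym'] y x by blast
      ultimately show "z \<in> C" by simp
    qed
    have UD: "\<Union>?D = C"
    proof
      show "\<Union>?D \<subseteq> C" by auto
      show "C \<subseteq> \<Union>?D"
      proof
        fix z assume z: "z \<in> C"
        then have zY: "z \<in> Y" using CY by auto
        have "gcomp Y R z \<in> comps Y R" using zY by (simp add: comps_def)
        moreover have "z \<in> gcomp Y R z" using zY by (rule comp_self)
        ultimately show "z \<in> \<Union>?D" using sub z by blast
      qed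
    qed
    have finD: "finite ?D" using comps_finite[OF fin] by simp
    have pw: "pairwise disjnt ?D"
      unfolding pairwise_def disjnt_def using comps_disjoint[OF sym] by blast
    have "card C = sum card ?D"
      using card_Union_disjoint[OF pw] UD comps_sub fin finite_subset by (metis (no_types, lifting) mem_Collect_eq)
    moreover have "odd (card C)" using C by (simp add: oddc_def)
    ultimately have "odd (card {D \<in> ?D. odd (card D)})" using even_sum_iff[OF finD, of card] by simp
    then have "{D \<in> ?D. odd (card D)} \<noteq> {}" by (metis card.empty even_zero)
    then show ?thesis by (auto simp: oddc_def)
  qed
  define f where "f C = (SOME D. D \<in> oddc Y R \<and> D \<subseteq> C)" for C
  have f: "f C \<in> oddc Y R \<and> f C \<subseteq> C" if "C \<in> oddc Y R'" for C
    unfolding f_def using someI_ex[OF ex[OF that]] .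
  have inj: "inj_on f (oddc Y R')"
  proof
    fix C1 C2 assume c1: "C1 \<in> oddc Y R'" and c2: "C2 \<in> oddc Y R'" and eq: "f C1 = f C2"
    have ne: "f C1 \<noteq> {}" using f[OF c1] comps_nonempty by (auto simp: oddc_def)
    have "C1 \<inter> C2 \<noteq> {}" using f[OF c1] f[OF c2] eq ne by blast
    then show "C1 = C2" using comps_disjoint[OF sym'] c1 c2 by (auto simp: oddc_def)
  qed
  have "f ` oddc Y R' \<subseteq> oddc Y R" using f by auto
  moreover have "finite (oddc Y R)" using comps_finite[OF fin] by (simp add: oddc_def)
  ultimately show ?thesis using card_inj_on_le[OF inj] by blast
qed

lemma ipm_empty: "ipm {} R p" by (simp add: ipm_def)

lemma even_clique_ipm:
  assumes "finite P" "even (card P)" "\<And>a b. a \<in> P \<Longrightarrow> b \<in> P \<Longrightarrow> a \<noteq> b \<Longrightarrow> R a b"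
  shows "\<exists>p. ipm P R p"
  using assms
proof (induction "card P" arbitrary: P rule: less_induct)
  case less
  show ?case
  proof (cases "P = {}")
    case True then show ?thesis using ipm_empty by blast
  next
    case False
    then obtain a where a: "a \<in> P" by auto
    have c0: "card P \<noteq> 0" using a less.prems(1) by auto
    have c2: "card P \<ge> 2" using c0 less.prems(2) by presburger
    have "card (P - {a}) \<ge> 1" using c2 a less.prems(1) by (simp add: card_Diff_singleton)
    then have "P - {a} \<noteq> {}" by (metis card.empty not_one_le_zero)
    then obtain b where b: "b \<in> P" "b \<noteq> a" by auto
    let ?P = "P - {a, b}"
    have cP: "card ?P = card P - 2" using a b less.prems(1) by (simp add: card_Diff_subset)
    have lt: "card ?P < card P" using a b less.prems(1) by (metis Diff_insert2 card_Diff2_less)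
    have "even (card ?P)" using cP less.prems(2) lt by (simp add: even_diff_nat)
    then obtain p where p: "ipm ?P R p" using less.hyps[OF lt] less.prems by auto
    define q where "q x = (if x = a then b else if x = b then a else p x)" for x
    have "ipm P R q" unfolding ipm_def
    proof
      fix x assume x: "x \<in> P"
      show "q x \<in> P \<and> q x \<noteq> x \<and> q (q x) = x \<and> R x (q x)"
      proof (cases "x = a \<or> x = b")
        case True then show ?thesis using a b less.prems(3) by (auto simp: q_def)
      next
        case False
        then have "x \<in> ?P" using x by auto
        then have px: "p x \<in> ?P" "p x \<noteq> x" "p (p x) = x" "R x (p x)" using p by (auto simp: ipm_def)
        then show ?thesis using False by (auto simp: q_def)
      qed
    qed
    then show ?thesis by blast
  qed
qed

lemma ipm_Union:
  assumes "\<And>B. B \<in> \<P> \<Longrightarrow> \<exists>p. ipm B R p"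
    and "\<And>B1 B2. B1 \<in> \<P> \<Longrightarrow> B2 \<in> \<P> \<Longrightarrow> B1 \<noteq> B2 \<Longrightarrow> B1 \<inter> B2 = {}"
  shows "\<exists>p. ipm (\<Union>\<P>) R p"
proof -
  have "\<forall>B\<in>\<P>. \<exists>p. ipm B R p" using assms(1) by blast
  then obtain f where f0: "\<forall>B\<in>\<P>. ipm B R (f B)" by (rule bchoice[elim_format]) blast
  have f: "\<And>B. B \<in> \<P> \<Longrightarrow> ipm B R (f B)" using f0 by blast
  define blk where "blk x = (THE B. B \<in> \<P> \<and> x \<in> B)" for x
  have blk: "blk x = B" if "B \<in> \<P>" "x \<in> B" for x B
    unfolding blk_def
  proof (rule the_equality)
    show "B \<in> \<P> \<and> x \<in> B" using that by blast
    fix B' assume "B' \<in> \<P> \<and> x \<in> B'"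
    then show "B' = B" using that assms(2) by blast
  qed
  define p where "p x = f (blk x) x" for x
  have "ipm (\<Union>\<P>) R p" unfolding ipm_def
  proof
    fix x assume "x \<in> \<Union>\<P>"
    then obtain B where B: "B \<in> \<P>" "x \<in> B" by auto
    have px: "p x = f B x" using blk[OF B] by (simp add: p_def)
    have fB: "f B x \<in> B" "f B x \<noteq> x" "f B (f B x) = x" "R x (f B x)" using f[OF B(1)] B(2) by (auto simp: ipm_def)
    have "p (f B x) = f B (f B x)" using blk[OF B(1) fB(1)] by (simp add: p_def)
    then show "p x \<in> \<Union>\<P> \<and> p x \<noteq> x \<and> p (p x) = x \<and> R x (p x)" using px fB B by auto
  qed
  then show ?thesis by blast
qed

lemma p3_lemma:
  assumes sym: "symp R" and "(rin Y R)\<^sup>*\<^sup>* a b" "\<not> R a b" "a \<noteq> b"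
  shows "\<exists>y z. R a y \<and> R y z \<and> \<not> R a z \<and> z \<noteq> a \<and> y \<in> Y \<and> z \<in> Y"
  using assms(2,3,4)
proof (induction rule: rtranclp_induct)
  case base then show ?case by simp
next
  case (step y z)
  show ?case
  proof (cases "y = a")
    case True then show ?thesis using step by (auto simp: rin_def)
  next
    case False
    show ?thesis
    proof (cases "R a y")
      case True then show ?thesis using step by (auto simp: rin_def)
    next
      case False2: False
      then show ?thesis using step False by blast
    qed
  qed
qed

definition phi :: "('a \<Rightarrow> 'a) \<Rightarrow> 'a set \<Rightarrow> 'a set \<Rightarrow> nat" where
  "phi f T A = card {v \<in> A. v \<notin> T \<and> f v \<notin> A}"

lemma phi_insert:
  assumes fin: "finite A" and u: "u \<notin> A" and inv: "\<And>v. v \<in> insert u A \<Longrightarrow> f (f v) = v"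
    and nfix: "f u \<noteq> u"
    and Tc: "\<And>v. v \<in> insert u A \<Longrightarrow> (v \<in> T \<longleftrightarrow> f v \<in> T)"
  shows "int (phi f T (insert u A)) + of_bool (u \<notin> T \<and> f u \<in> A)
       = int (phi f T A) + of_bool (u \<notin> T \<and> f u \<notin> A)"
proof -
  let ?SA = "{v \<in> A. v \<notin> T \<and> f v \<notin> A}"
  let ?SB = "{v \<in> insert u A. v \<notin> T \<and> f v \<notin> insert u A}"
  have finSA: "finite ?SA" using fin by simp
  have part: "?SB = (?SA - {f u}) \<union> (if u \<notin> T \<and> f u \<notin> A then {u} else {})"
  proof (intro set_eqI iffI)
    fix v assume v: "v \<in> ?SB"
    show "v \<in> (?SA - {f u}) \<union> (if u \<notin> T \<and> f u \<notin> A then {u} else {})"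
    proof (cases "v = u")
      case True then show ?thesis using v by auto
    next
      case False
      then have vA: "v \<in> A" using v by auto
      have "f v \<noteq> u" using v by auto
      then have "v \<noteq> f u" using inv[of u] by auto
      then show ?thesis using v vA False by auto
    qed
  next
    fix v assume v: "v \<in> (?SA - {f u}) \<union> (if u \<notin> T \<and> f u \<notin> A then {u} else {})"
    show "v \<in> ?SB"
    proof (cases "v = u")
      case True then show ?thesis using v nfix u by (auto split: if_splits)
    next
      case False
      then have vA: "v \<in> ?SA" "v \<noteq> f u" using v by (auto split: if_splits)
      have "f v \<noteq> u" using vA inv[of v] by auto
      then show ?thesis using vA by auto
    qed
  qed
  have dis: "(?SA - {f u}) \<inter> (if u \<notin> T \<and> f u \<notin> A then {u} else {}) = {}" using u by auto
  have c1: "card ?SB = card (?SA - {f u}) + card (if u \<notin> T \<and> f u \<notin> A then {u} else {})"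
    unfolding part by (rule card_Un_disjoint) (use finSA dis in auto)
  have c2: "card (?SA - {f u}) + of_bool (f u \<in> ?SA) = card ?SA"
  proof (cases "f u \<in> ?SA")
    case True then show ?thesis using card.remove[OF finSA True] by simp
  qed simp
  have c3: "(f u \<in> ?SA) = (u \<notin> T \<and> f u \<in> A)"
  proof
    assume "f u \<in> ?SA" then show "u \<notin> T \<and> f u \<in> A" using Tc[of u] inv[of u] u by auto
  next
    assume h: "u \<notin> T \<and> f u \<in> A"
    then have "f u \<notin> T" using Tc[of u] by auto
    moreover have "f (f u) \<notin> A" using inv[of u] u by auto
    ultimately show "f u \<in> ?SA" using h by auto
  qed
  show ?thesis unfolding phi_def using c1 c2 c3 by (auto split: if_splits)
qed

lemma first_exit:
  assumes "Q\<^sup>*\<^sup>* w b" "w \<in> A" "b \<notin> A"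
  shows "\<exists>a u. a \<in> A \<and> u \<notin> A \<and> Q a u \<and> Q\<^sup>*\<^sup>* w u"
  using assms
proof (induction rule: rtranclp_induct)
  case base then show ?case by simp
next
  case (step y z)
  show ?case
  proof (cases "y \<in> A")
    case True then show ?thesis using step by (meson rtranclp.rtrancl_into_rtrancl)
  next
    case False then show ?thesis using step by blast
  qed
qed

locale swap_setup =
  fixes X :: "'a set" and R :: "'a \<Rightarrow> 'a \<Rightarrow> bool" and p q :: "'a \<Rightarrow> 'a" and x y z w :: 'a
  assumes finX: "finite X"
    and sg: "sgraph X R"
    and p: "ipm X (\<lambda>u v. R u v \<or> (u = x \<and> v = z) \<or> (u = z \<and> v = x)) p"
    and q: "ipm X (\<lambda>u v. R u v \<or> (u = y \<and> v = w) \<or> (u = w \<and> v = y)) q"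
    and pxz: "p x = z" and qyw: "q y = w"
    and Rxy: "R x y" and Ryz: "R y z" and nRxz: "\<not> R x z" and nRyw: "\<not> R y w"
    and xX: "x \<in> X" and yX: "y \<in> X" and zX: "z \<in> X" and wX: "w \<in> X"
    and xz: "x \<noteq> z" and yw: "y \<noteq> w"
begin

lemma Rsym: "R a b \<Longrightarrow> R b a" using sg by (auto simp: sgraph_def)
lemma Rirr: "R a b \<Longrightarrow> a \<noteq> b" using sg by (auto simp: sgraph_def)

lemma dist: "x \<noteq> y" "y \<noteq> z" "w \<noteq> x" "w \<noteq> z" "w \<noteq> y"
  using Rirr[OF Rxy] Rirr[OF Ryz] Rxy Ryz nRyw Rsym yw by auto

lemma pX: "v \<in> X \<Longrightarrow> p v \<in> X" "v \<in> X \<Longrightarrow> p v \<noteq> v" "v \<in> X \<Longrightarrow> p (p v) = v"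
  using p by (auto simp: ipm_def)
lemma qX: "v \<in> X \<Longrightarrow> q v \<in> X" "v \<in> X \<Longrightarrow> q v \<noteq> v" "v \<in> X \<Longrightarrow> q (q v) = v"
  using q by (auto simp: ipm_def)
lemma pR: "v \<in> X \<Longrightarrow> v \<notin> {x, z} \<Longrightarrow> R v (p v)"
  using p by (auto simp: ipm_def)
lemma qR: "v \<in> X \<Longrightarrow> v \<notin> {y, w} \<Longrightarrow> R v (q v)"
  using q by (auto simp: ipm_def)
lemma pzx: "p z = x" using pxz pX xX by metis
lemma qwy: "q w = y" using qyw qX yX by metis

lemma pT: "v \<in> X \<Longrightarrow> (v \<in> {x, z} \<longleftrightarrow> p v \<in> {x, z})"
  using pxz pzx pX by (metis insert_iff singleton_iff)
lemma qT: "v \<in> X \<Longrightarrow> (v \<in> {y, w} \<longleftrightarrow> q v \<in> {y, w})"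
  using qyw qwy qX by (metis insert_iff singleton_iff)

definition step :: "'a \<Rightarrow> 'a \<Rightarrow> bool" where
  "step a b \<longleftrightarrow> a \<in> X \<and> ((a \<notin> {x, z} \<and> b = p a) \<or> (a \<notin> {y, w} \<and> b = q a))"

definition D :: "'a set" where "D = {u. step\<^sup>*\<^sup>* w u}"

lemma wD: "w \<in> D" by (simp add: D_def)

lemma DX: "D \<subseteq> X"
proof
  fix u assume "u \<in> D"
  then have "step\<^sup>*\<^sup>* w u" by (simp add: D_def)
  then show "u \<in> X" by (induction rule: rtranclp_induct) (auto simp: step_def wX pX qX)
qed

lemma finD: "finite D" using DX finX finite_subset by blast

lemma Dp: assumes "a \<in> D" "a \<notin> {x, z}" shows "p a \<in> D"
proof -
  have "step a (p a)" using assms DX by (auto simp: step_def)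
  then show ?thesis using assms(1) unfolding D_def by (auto intro: rtranclp.rtrancl_into_rtrancl)
qed
lemma Dq: assumes "a \<in> D" "a \<notin> {y, w}" shows "q a \<in> D"
proof -
  have "step a (q a)" using assms DX by (auto simp: step_def)
  then show ?thesis using assms(1) unfolding D_def by (auto intro: rtranclp.rtrancl_into_rtrancl)
qed
lemma nDp: "a \<in> X \<Longrightarrow> a \<notin> D \<Longrightarrow> a \<notin> {x, z} \<Longrightarrow> p a \<notin> D"
  using Dp pT pX by metis
lemma nDq: "a \<in> X \<Longrightarrow> a \<notin> D \<Longrightarrow> a \<notin> {y, w} \<Longrightarrow> q a \<notin> D"
  using Dq qT qX by metis

definition val :: "'a set \<Rightarrow> nat" where
  "val A = phi p {x, z} A + phi q {y, w} A + card (A \<inter> {x, y, z})"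

definition Inv :: "'a set \<Rightarrow> bool" where
  "Inv A \<longleftrightarrow> w \<in> A \<and> A \<subseteq> D \<and> val A = 1"

lemma Inv_base: "Inv {w}"
proof -
  have "phi p {x, z} {w} = 1"
  proof -
    have "{v \<in> {w}. v \<notin> {x, z} \<and> p v \<notin> {w}} = {w}" using dist pX wX by auto
    then show ?thesis by (simp add: phi_def)
  qed
  moreover have "phi q {y, w} {w} = 0" by (simp add: phi_def)
  moreover have "{w} \<inter> {x, y, z} = {}" using dist by auto
  ultimately show ?thesis by (simp add: Inv_def val_def wD)
qed

lemma Inv_step:
  assumes I: "Inv A" and a: "a \<in> A" and u: "u \<notin> A" and st: "step a u" and uD: "u \<in> D"
  shows "Inv (insert u A)"
proof -
  have AX: "A \<subseteq> X" using I DX by (auto simp: Inv_def)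
  have finA: "finite A" using AX finX finite_subset by blast
  have uX: "u \<in> X" using uD DX by auto
  have uw: "u \<noteq> w" using I u by (auto simp: Inv_def)
  have hp: "int (phi p {x, z} (insert u A)) + of_bool (u \<notin> {x, z} \<and> p u \<in> A)
       = int (phi p {x, z} A) + of_bool (u \<notin> {x, z} \<and> p u \<notin> A)"
    apply (rule phi_insert[OF finA u])
    subgoal for v using AX uX pX(3)[of v] by blast
    subgoal using pX(2)[OF uX] by simp
    subgoal for v using AX uX pT[of v] by blast
    done
  have hq: "int (phi q {y, w} (insert u A)) + of_bool (u \<notin> {y, w} \<and> q u \<in> A)
       = int (phi q {y, w} A) + of_bool (u \<notin> {y, w} \<and> q u \<notin> A)"
    apply (rule phi_insert[OF finA u])
    subgoal for v using AX uX qX(3)[of v] by blast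
    subgoal using qX(2)[OF uX] by simp
    subgoal for v using AX uX qT[of v] by blast
    done
  have hs: "int (card (insert u A \<inter> {x, y, z})) = int (card (A \<inter> {x, y, z})) + of_bool (u \<in> {x, z}) + of_bool (u = y)"
  proof -
    have "insert u A \<inter> {x, y, z} = (if u \<in> {x, y, z} then insert u (A \<inter> {x, y, z}) else A \<inter> {x, y, z})" by auto
    then show ?thesis using u dist finA by (auto simp: card_insert_if)
  qed
  have conn: "(u \<notin> {x, z} \<and> p u \<in> A) \<or> (u \<notin> {y, w} \<and> q u \<in> A)"
  proof -
    have aX: "a \<in> X" using a AX by auto
    from st show ?thesis unfolding step_def
    proof (elim conjE disjE)
      assume "a \<notin> {x, z}" "u = p a"
      then show ?thesis using pT[OF aX] pX[OF aX] a by auto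
    next
      assume "a \<notin> {y, w}" "u = q a"
      then show ?thesis using qT[OF aX] qX[OF aX] a by auto
    qed
  qed
  have old: "int (val A) = 1" using I by (simp add: Inv_def)
  have eq: "int (val (insert u A)) = int (val A) + 2
      - 2 * (of_bool (u \<notin> {x, z} \<and> p u \<in> A) + of_bool (u \<notin> {y, w} \<and> q u \<in> A))"
    using hp hq hs uw unfolding val_def by (auto split: if_splits)
  have "int (val (insert u A)) \<le> 1" using eq old conn by auto
  moreover have "odd (val (insert u A))"
  proof -
    have "even (int (val (insert u A)) - int (val A))" using eq by auto
    then have "odd (int (val (insert u A)))" using old by presburger
    then show ?thesis by simp
  qed
  ultimately have "val (insert u A) = 1"
    by (metis One_nat_def dvd_0_right le_Suc_eq le_zero_eq of_nat_le_1_iff)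
  then show ?thesis using I uD by (auto simp: Inv_def)
qed

lemma Inv_D: "Inv D"
proof -
  have "Inv A \<Longrightarrow> Inv D" for A
  proof (induction "card (D - A)" arbitrary: A rule: less_induct)
    case less
    show ?case
    proof (cases "D \<subseteq> A")
      case True then have "A = D" using less.prems by (auto simp: Inv_def)
      then show ?thesis using less.prems by simp
    next
      case False
      then obtain b where b: "b \<in> D" "b \<notin> A" by auto
      have "step\<^sup>*\<^sup>* w b" using b by (simp add: D_def)
      then obtain a u where au: "a \<in> A" "u \<notin> A" "step a u" "step\<^sup>*\<^sup>* w u"
        using first_exit[of step w b A] b less.prems by (auto simp: Inv_def)
      have uD: "u \<in> D" using au by (simp add: D_def)
      have I': "Inv (insert u A)" by (rule Inv_step[OF less.prems au(1,2,3) uD])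
      have e: "D - insert u A = (D - A) - {u}" by auto
      have "card ((D - A) - {u}) < card (D - A)"
        by (rule card_Diff1_less) (use finD uD au(2) in auto)
      then have "card (D - insert u A) < card (D - A)" by (simp only: e)
      then show ?thesis by (rule less.hyps[OF _ I'])
    qed
  qed
  then show ?thesis using Inv_base by blast
qed

lemma card_D3: "card (D \<inter> {x, y, z}) = 1"
proof -
  have "{v \<in> D. v \<notin> {x, z} \<and> p v \<notin> D} = {}" using Dp by blast
  then have "phi p {x, z} D = 0" unfolding phi_def by (simp only: card.empty)
  moreover have "{v \<in> D. v \<notin> {y, w} \<and> q v \<notin> D} = {}" using Dq by blast
  then have "phi q {y, w} D = 0" unfolding phi_def by (simp only: card.empty)
  ultimately show ?thesis using Inv_D by (simp add: Inv_def val_def)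
qed

lemma result: "\<exists>r. ipm X R r"
proof -
  obtain c where c: "D \<inter> {x, y, z} = {c}" using card_1_singletonE[OF card_D3] by blast
  show ?thesis
  proof (cases "c = y")
    case True
    then have cy: "D \<inter> {x, y, z} = {y}" using c by simp
    have yD: "y \<in> D" using cy by (metis Int_iff insertCI)
    have xD: "x \<notin> D"
    proof
      assume "x \<in> D" then have "x \<in> D \<inter> {x, y, z}" by simp
      then show False using cy dist(1) by simp
    qed
    have zD: "z \<notin> D"
    proof
      assume "z \<in> D" then have "z \<in> D \<inter> {x, y, z}" by simp
      then show False using cy dist(2) by simp
    qed
    define r where "r v = (if v \<in> D then p v else q v)" for v
    have "ipm X R r" unfolding ipm_def
    proof
      fix v assume vX: "v \<in> X"
      show "r v \<in> X \<and> r v \<noteq> v \<and> r (r v) = v \<and> R v (r v)"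
      proof (cases "v \<in> D")
        case True
        then have vn: "v \<notin> {x, z}" using xD zD by auto
        then have pD: "p v \<in> D" using Dp True by blast
        have rv: "r v = p v" using True by (simp add: r_def)
        have rr: "r (p v) = p (p v)" using pD by (simp add: r_def)
        show ?thesis using rv rr pX[OF vX] pR[OF vX vn] by simp
      next
        case False
        then have vn: "v \<notin> {y, w}" using yD wD by auto
        then have qD: "q v \<notin> D" using nDq False vX by blast
        have rv: "r v = q v" using False by (simp add: r_def)
        have rr: "r (q v) = q (q v)" using qD by (simp add: r_def)
        show ?thesis using rv rr qX[OF vX] qR[OF vX vn] by simp
      qed
    qed
    then show ?thesis by blast
  next
    case False
    then have cxz: "c = x \<or> c = z" using c by auto
    have yD: "y \<notin> D"
    proof
      assume "y \<in> D" then have "y \<in> D \<inter> {x, y, z}" by simp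
      then show False using c False by simp
    qed
    define t where "t = c"
    have tD: "t \<in> D" using c t_def by (metis Int_iff insertCI)
    have tX: "t \<in> X" using tD DX by auto
    have txz: "t \<in> {x, z}" using cxz t_def by auto
    have t'D: "p t \<notin> D"
    proof
      assume "p t \<in> D"
      moreover have "p t \<in> {x, y, z}" using txz pxz pzx by auto
      moreover have "p t \<noteq> t" using pX tX by auto
      ultimately have "p t \<in> D \<inter> {x, y, z}" by simp
      then show False using c t_def \<open>p t \<noteq> t\<close> by simp
    qed
    have Rty: "R t y" using txz Rxy Ryz Rsym by auto
    define r where "r v = (if v = t then y else if v = y then t else if v \<in> D then p v else q v)" for v
    have ty: "t \<noteq> y" using tD yD by auto
    have rt: "r t = y" by (simp add: r_def)
    have ry: "r y = t" using ty by (simp add: r_def)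
    have "ipm X R r" unfolding ipm_def
    proof
      fix v assume vX: "v \<in> X"
      show "r v \<in> X \<and> r v \<noteq> v \<and> r (r v) = v \<and> R v (r v)"
      proof (cases "v = t")
        case True
        then show ?thesis using rt ry ty Rty yX by simp
      next
        case vt: False
        show ?thesis
        proof (cases "v = y")
          case True
          then show ?thesis using rt ry ty Rty Rsym tX by simp
        next
          case vy: False
          show ?thesis
          proof (cases "v \<in> D")
            case True
            have vn: "v \<notin> {x, z}"
            proof
              assume "v \<in> {x, z}" then have "v \<in> D \<inter> {x, y, z}" using True by auto
              then show False using c t_def vt by simp
            qed
            have pD: "p v \<in> D" using Dp True vn by blast
            have pt: "p v \<noteq> t"
            proof
              assume "p v = t" then have "p (p v) = p t" by simp
              then have "v = p t" using pX(3)[OF vX] by simp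
              then show False using t'D True by simp
            qed
            have py: "p v \<noteq> y" using pD yD by auto
            have rv: "r v = p v" using True vt vy by (simp add: r_def)
            have rr: "r (p v) = p (p v)" using pD pt py by (simp add: r_def)
            show ?thesis using rv rr pX[OF vX] pR[OF vX vn] by simp
          next
            case False
            have vn: "v \<notin> {y, w}" using vy False wD by auto
            have qD: "q v \<notin> D" using nDq False vX vn by blast
            have qt: "q v \<noteq> t" using qD tD by auto
            have qy: "q v \<noteq> y"
            proof
              assume "q v = y" then have "q (q v) = q y" by simp
              then have "v = w" using qX(3)[OF vX] qyw by simp
              then show False using vn by simp
            qed
            have rv: "r v = q v" using False vt vy by (simp add: r_def)
            have rr: "r (q v) = q (q v)" using qD qt qy by (simp add: r_def)
            show ?thesis using rv rr qX[OF vX] qR[OF vX vn] by simp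
          qed
        qed
      qed
    qed
    then show ?thesis by blast
  qed
qed

end

lemma sgraph_symp: "sgraph X R \<Longrightarrow> symp R"
  by (auto simp: sgraph_def symp_def)

lemma tutte_even:
  assumes fin: "finite X" and sg: "sgraph X R" and t: "tutte X R"
  shows "even (card X)"
proof -
  have "card (oddc (X - {}) R) \<le> card ({}::'a set)" using t unfolding tutte_def by blast
  then have "card (oddc X R) = 0" by simp
  then show ?thesis using parity_comps[OF sgraph_symp[OF sg] fin] by simp
qed

lemma complete_case:
  assumes fin: "finite X" and sg: "sgraph X R" and t: "tutte X R"
    and Sdef: "S = {v \<in> X. \<forall>u\<in>X. u \<noteq> v \<longrightarrow> R v u}"
    and cl: "\<And>C a b. C \<in> comps (X - S) R \<Longrightarrow> a \<in> C \<Longrightarrow> b \<in> C \<Longrightarrow> a \<noteq> b \<Longrightarrow> R a b"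
  shows "\<exists>p. ipm X R p"
proof -
  have sym: "symp R" using sg by (rule sgraph_symp)
  have SX: "S \<subseteq> X" using Sdef by auto
  have finS: "finite S" using SX fin finite_subset by blast
  let ?O = "oddc (X - S) R"
  let ?K = "comps (X - S) R"
  have finK: "finite ?K" using fin by (simp add: comps_finite)
  have finO: "finite ?O" using finK by (simp add: oddc_def)
  have OK: "?O \<subseteq> ?K" by (auto simp: oddc_def)
  have cO: "card ?O \<le> card S" using t SX by (simp add: tutte_def)
  obtain g where g: "g ` ?O \<subseteq> S" "inj_on g ?O" using card_le_inj[OF finO finS cO] by blast
  have Ssub: "\<And>C. C \<in> ?K \<Longrightarrow> C \<subseteq> X - S" by (rule comps_sub)
  have Sadj: "\<And>s u. s \<in> S \<Longrightarrow> u \<in> X \<Longrightarrow> u \<noteq> s \<Longrightarrow> R s u" using Sdef by auto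
  have Rsym: "\<And>a b. R a b \<Longrightarrow> R b a" using sym by (auto dest: sympD)
  have finC: "finite C" if CK: "C \<in> ?K" for C
  proof -
    have "C \<subseteq> X" using Ssub[OF CK] by blast
    then show ?thesis using fin by (rule finite_subset)
  qed
  define P1 where "P1 = (\<lambda>C. insert (g C) C) ` ?O"
  define P2 where "P2 = ?K - ?O"
  define S' where "S' = S - g ` ?O"
  define \<P> where "\<P> = P1 \<union> P2 \<union> {S'}"
  have blocks: "\<exists>p. ipm B R p" if B: "B \<in> \<P>" for B
  proof -
    consider (a) "B \<in> P1" | (b) "B \<in> P2" | (c) "B = S'" using B by (auto simp: \<P>_def)
    then show ?thesis
    proof cases
      case a
      then obtain C where C: "C \<in> ?O" "B = insert (g C) C" by (auto simp: P1_def)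
      have CK: "C \<in> ?K" using C OK by auto
      have gS: "g C \<in> S" using g C by auto
      have gC: "g C \<notin> C" using Ssub[OF CK] gS by auto
      have eB: "even (card B)" using C gC finC[OF CK] by (simp add: oddc_def)
      have fB: "finite B" using C finC[OF CK] by simp
      have cB: "R a b" if "a \<in> B" "b \<in> B" "a \<noteq> b" for a b
      proof -
        have CX: "C \<subseteq> X" using Ssub[OF CK] by auto
        show ?thesis
        proof (cases "a = g C")
          case True then show ?thesis using that C CX Sadj gS by auto
        next
          case False
          show ?thesis
          proof (cases "b = g C")
            case True then show ?thesis using that C CX Sadj gS Rsym False by auto
          next
            case False2: False
            then show ?thesis using that C False cl[OF CK] by auto
          qed
        qed
      qed
      show ?thesis by (rule even_clique_ipm[OF fB eB cB])
    next
      case b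
      then have BK: "B \<in> ?K" "B \<notin> ?O" by (auto simp: P2_def)
      then have "even (card B)" by (auto simp: oddc_def)
      then show ?thesis using finC[OF BK(1)] cl[OF BK(1)] by (intro even_clique_ipm) auto
    next
      case c
      have cS': "card S' = card S - card ?O"
      proof -
        have "card S' = card S - card (g ` ?O)" unfolding S'_def
          by (rule card_Diff_subset) (use finO g in auto)
        then show ?thesis using card_image[OF g(2)] by simp
      qed
      have e0: "card (X - S) = card X - card S" by (rule card_Diff_subset[OF finS SX])
      have "card S \<le> card X" by (rule card_mono[OF fin SX])
      then have e1: "card X = card S + card (X - S)" using e0 by simp
      have e2: "even (card X)" by (rule tutte_even[OF fin sg t])
      have e3: "even (card (X - S)) \<longleftrightarrow> even (card ?O)" by (rule parity_comps[OF sym]) (use fin in simp)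
      have eB: "even (card S')" unfolding cS' using e1 e2 e3 cO by presburger
      have fB: "finite S'" using finS by (simp add: S'_def)
      have cB: "R a b" if "a \<in> S'" "b \<in> S'" "a \<noteq> b" for a b
        using that Sadj SX by (auto simp: S'_def)
      show ?thesis unfolding c by (rule even_clique_ipm[OF fB eB cB])
    qed
  qed
  have disj: "B1 \<inter> B2 = {}" if B1: "B1 \<in> \<P>" and B2: "B2 \<in> \<P>" and ne: "B1 \<noteq> B2" for B1 B2
  proof -
    have kd: "C1 \<inter> C2 = {}" if KK: "C1 \<in> ?K" "C2 \<in> ?K" "C1 \<noteq> C2" for C1 C2
      using comps_disjoint[OF sym] KK by blast
    have P1d: "B \<inter> S' = {}" if BP: "B \<in> P1" for B
    proof -
      obtain C where C: "C \<in> ?O" "B = insert (g C) C" using BP by (auto simp: P1_def)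
      then show ?thesis using Ssub[of C] OK by (auto simp: S'_def)
    qed
    have P2d: "B \<inter> S' = {}" if BP: "B \<in> P2" for B
      using BP Ssub by (auto simp: S'_def P2_def)
    have P12: "B \<inter> B' = {}" if BP: "B \<in> P1" "B' \<in> P2" for B B'
    proof -
      obtain C where C: "C \<in> ?O" "B = insert (g C) C" using BP by (auto simp: P1_def)
      have "C \<noteq> B'" "B' \<in> ?K" using C BP by (auto simp: P2_def)
      then have "C \<inter> B' = {}" using kd C OK by auto
      moreover have "g C \<notin> B'" using g C Ssub[OF \<open>B' \<in> ?K\<close>] by auto
      ultimately show ?thesis using C by auto
    qed
    have P11: "B \<inter> B' = {}" if BP: "B \<in> P1" "B' \<in> P1" "B \<noteq> B'" for B B'
    proof -
      obtain C where C: "C \<in> ?O" "B = insert (g C) C" using BP by (auto simp: P1_def)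
      obtain C' where C': "C' \<in> ?O" "B' = insert (g C') C'" using BP by (auto simp: P1_def)
      have "C \<noteq> C'" using C C' BP by auto
      then have "C \<inter> C' = {}" "g C \<noteq> g C'" using kd C C' OK g(2) by (auto dest: inj_onD)
      moreover have "g C \<notin> C'" "g C' \<notin> C" using g C C' Ssub OK by blast+
      ultimately show ?thesis using C C' by auto
    qed
    have P22: "B \<inter> B' = {}" if BP: "B \<in> P2" "B' \<in> P2" "B \<noteq> B'" for B B'
      using kd BP by (auto simp: P2_def)
    consider "B1 \<in> P1" | "B1 \<in> P2" | "B1 = S'" using B1 by (auto simp: \<P>_def)
    moreover consider "B2 \<in> P1" | "B2 \<in> P2" | "B2 = S'" using B2 by (auto simp: \<P>_def)
    ultimately show ?thesis using ne P1d P2d P12 P11 P22 by (metis inf_commute)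
  qed
  have U: "\<Union>\<P> = X"
  proof
    show "\<Union>\<P> \<subseteq> X"
    proof -
      have "B \<subseteq> X" if BP: "B \<in> \<P>" for B
      proof -
        consider "B \<in> P1" | "B \<in> P2" | "B = S'" using BP by (auto simp: \<P>_def)
        then show ?thesis
        proof cases
          case 1
          then obtain C where C: "C \<in> ?O" "B = insert (g C) C" by (auto simp: P1_def)
          have "C \<subseteq> X" using Ssub[of C] C OK by blast
          moreover have "g C \<in> X" using g C SX by blast
          ultimately show ?thesis using C by simp
        next
          case 2 then show ?thesis using Ssub unfolding P2_def by blast
        next
          case 3 then show ?thesis using SX unfolding S'_def by blast
        qed
      qed
      then show ?thesis by blast
    qed
    show "X \<subseteq> \<Union>\<P>"
    proof
      fix v assume vX: "v \<in> X"
      show "v \<in> \<Union>\<P>"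
      proof (cases "v \<in> S")
        case True
        show ?thesis
        proof (cases "v \<in> g ` ?O")
          case True
          then obtain C where C: "C \<in> ?O" "v = g C" by auto
          have "insert (g C) C \<in> \<P>" unfolding \<P>_def P1_def using C(1) by blast
          then show ?thesis using C(2) by blast
        next
          case False
          then have "v \<in> S'" using \<open>v \<in> S\<close> by (simp add: S'_def)
          moreover have "S' \<in> \<P>" by (simp add: \<P>_def)
          ultimately show ?thesis by blast
        qed
      next
        case False
        have KU: "\<Union>?K = X - S" by (rule comps_Union)
        have "v \<in> \<Union>?K" unfolding KU using vX False by blast
        then obtain C where C: "C \<in> ?K" "v \<in> C" by auto
        show ?thesis
        proof (cases "C \<in> ?O")
          case True
          then have "insert (g C) C \<in> \<P>" unfolding \<P>_def P1_def by blast
          then show ?thesis using C(2) by blast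
        next
          case False
          then have "C \<in> \<P>" unfolding \<P>_def P2_def using C(1) by blast
          then show ?thesis using C(2) by blast
        qed
      qed
    qed
  qed
  show ?thesis using ipm_Union[of \<P> R, OF blocks disj] U by simp
qed

definition nonedges :: "'a set \<Rightarrow> ('a \<Rightarrow> 'a \<Rightarrow> bool) \<Rightarrow> ('a \<times> 'a) set" where
  "nonedges X R = {(u, v). u \<in> X \<and> v \<in> X \<and> u \<noteq> v \<and> \<not> R u v}"

lemma add_edge:
  assumes fin: "finite X" and sg: "sgraph X R" and t: "tutte X R"
    and a: "a \<in> X" and b: "b \<in> X" and ab: "a \<noteq> b" and nab: "\<not> R a b"
  defines "R' \<equiv> (\<lambda>u v. R u v \<or> (u = a \<and> v = b) \<or> (u = b \<and> v = a))"
  shows "sgraph X R'" "tutte X R'" "card (nonedges X R') < card (nonedges X R)"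
proof -
  show sg': "sgraph X R'" using sg a b ab unfolding R'_def sgraph_def by auto
  show "tutte X R'" unfolding tutte_def
  proof (intro allI impI)
    fix S assume S: "S \<subseteq> X"
    have "card (oddc (X - S) R') \<le> card (oddc (X - S) R)"
      by (rule oddc_mono[OF sgraph_symp[OF sg] sgraph_symp[OF sg']]) (use fin in \<open>auto simp: R'_def\<close>)
    also have "\<dots> \<le> card S" using t S by (simp add: tutte_def)
    finally show "card (oddc (X - S) R') \<le> card S" .
  qed
  have sub: "nonedges X R' \<subseteq> nonedges X R" by (auto simp: nonedges_def R'_def)
  have "(a, b) \<in> nonedges X R" "(a, b) \<notin> nonedges X R'" using a b ab nab by (auto simp: nonedges_def R'_def)
  moreover have "finite (nonedges X R)"
  proof -
    have "nonedges X R \<subseteq> X \<times> X" by (auto simp: nonedges_def)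
    then show ?thesis using fin by (meson finite_SigmaI finite_subset)
  qed
  ultimately show "card (nonedges X R') < card (nonedges X R)" using sub by (metis psubsetI psubset_card_mono)
qed

theorem tutte_pm:
  assumes "finite X" "sgraph X R" "tutte X R"
  shows "\<exists>p. ipm X R p"
  using assms
proof (induction "card (nonedges X R)" arbitrary: R rule: less_induct)
  case less
  note fin = less.prems(1) and sg = less.prems(2) and t = less.prems(3)
  have sym: "symp R" using sg by (rule sgraph_symp)
  have Rsym: "\<And>a b. R a b \<Longrightarrow> R b a" using sym by (auto dest: sympD)
  define S where "S = {v \<in> X. \<forall>u\<in>X. u \<noteq> v \<longrightarrow> R v u}"
  show ?case
  proof (cases "\<forall>C\<in>comps (X - S) R. \<forall>a\<in>C. \<forall>b\<in>C. a \<noteq> b \<longrightarrow> R a b")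
    case True
    then show ?thesis using complete_case[OF fin sg t S_def] by blast
  next
    case False
    then obtain C a b where C: "C \<in> comps (X - S) R" and abC: "a \<in> C" "b \<in> C" and ab: "a \<noteq> b" "\<not> R a b"
      by blast
    obtain a0 where a0: "a0 \<in> X - S" "C = gcomp (X - S) R a0" using C by (auto simp: comps_def)
    have "gcomp (X - S) R a = C" using comp_eq[OF sym] abC a0 by blast
    then have "(rin (X - S) R)\<^sup>*\<^sup>* a b" using abC by (auto simp: gcomp_def)
    then obtain y z where yz: "R a y" "R y z" "\<not> R a z" "z \<noteq> a" "y \<in> X - S" "z \<in> X - S"
      using p3_lemma[OF sym] ab by blast
    have aXS: "a \<in> X - S" using abC C comps_sub by blast
    have "y \<notin> S" using yz by auto
    then obtain w where w: "w \<in> X" "w \<noteq> y" "\<not> R y w" using yz(5) by (auto simp: S_def)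
    define R1 where "R1 = (\<lambda>u v. R u v \<or> (u = a \<and> v = z) \<or> (u = z \<and> v = a))"
    define R2 where "R2 = (\<lambda>u v. R u v \<or> (u = y \<and> v = w) \<or> (u = w \<and> v = y))"
    have aX: "a \<in> X" and zX: "z \<in> X" and yX: "y \<in> X" using aXS yz by auto
    have h1: "sgraph X R1" "tutte X R1" "card (nonedges X R1) < card (nonedges X R)"
      using add_edge[OF fin sg t aX zX yz(4)[symmetric] yz(3)] unfolding R1_def by auto
    have h2: "sgraph X R2" "tutte X R2" "card (nonedges X R2) < card (nonedges X R)"
      using add_edge[OF fin sg t yX w(1) w(2)[symmetric] w(3)] unfolding R2_def by auto
    obtain p where p: "ipm X R1 p" using less.hyps[OF h1(3) fin h1(1) h1(2)] by blast
    obtain q where q: "ipm X R2 q" using less.hyps[OF h2(3) fin h2(1) h2(2)] by blast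
    show ?thesis
    proof (cases "p a = z")
      case False
      have "ipm X R p" unfolding ipm_def
      proof
        fix v assume vX: "v \<in> X"
        have pv: "p v \<in> X" "p v \<noteq> v" "p (p v) = v" "R1 v (p v)" using p vX by (auto simp: ipm_def)
        have "\<not> (v = z \<and> p v = a)" using False pv(3) by auto
        then show "p v \<in> X \<and> p v \<noteq> v \<and> p (p v) = v \<and> R v (p v)" using pv False by (auto simp: R1_def)
      qed
      then show ?thesis by blast
    next
      case True
      show ?thesis
      proof (cases "q y = w")
        case False
        have "ipm X R q" unfolding ipm_def
        proof
          fix v assume vX: "v \<in> X"
          have qv: "q v \<in> X" "q v \<noteq> v" "q (q v) = v" "R2 v (q v)" using q vX by (auto simp: ipm_def)
          have "\<not> (v = w \<and> q v = y)" using False qv(3) by auto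
          then show "q v \<in> X \<and> q v \<noteq> v \<and> q (q v) = v \<and> R v (q v)" using qv False by (auto simp: R2_def)
        qed
        then show ?thesis by blast
      next
        case qyw: True
        interpret swap_setup X R p q a y z w
          by (unfold_locales) (use fin sg p q True qyw yz aX yX zX w in \<open>auto simp: R1_def R2_def\<close>)
        show ?thesis by (rule result)
      qed
    qed
  qed
qed

definition nbr :: "('a \<Rightarrow> 'a \<Rightarrow> bool) \<Rightarrow> 'a \<Rightarrow> 'a set" where
  "nbr E v = {u. E v u \<and> u \<noteq> v}"

definition matching :: "('a \<Rightarrow> 'a \<Rightarrow> bool) \<Rightarrow> 'a set set \<Rightarrow> bool" where
  "matching E M \<longleftrightarrow> (\<forall>e\<in>M. \<exists>u v. e = {u, v} \<and> u \<noteq> v \<and> E u v) \<and>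
     (\<forall>e1\<in>M. \<forall>e2\<in>M. e1 \<noteq> e2 \<longrightarrow> e1 \<inter> e2 = {})"

definition covers :: "'a set set \<Rightarrow> 'a set \<Rightarrow> bool" where
  "covers M F \<longleftrightarrow> (\<forall>v\<in>F. \<exists>e\<in>M. v \<in> e)"

lemma ball_subset_aux: "\<forall>e\<in>M. Q e \<Longrightarrow> P \<subseteq> M \<Longrightarrow> \<forall>e\<in>P. Q e"
  by blast

lemma matching_subset: assumes "matching E M" "P \<subseteq> M" shows "matching E P"
proof -
  have a: "\<forall>e\<in>M. \<exists>u v. e = {u, v} \<and> u \<noteq> v \<and> E u v"
    and b: "\<forall>e1\<in>M. \<forall>e2\<in>M. e1 \<noteq> e2 \<longrightarrow> e1 \<inter> e2 = {}" using assms(1) unfolding matching_def by auto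
  have "\<forall>e\<in>P. \<exists>u v. e = {u, v} \<and> u \<noteq> v \<and> E u v" by (rule ball_subset_aux[OF a assms(2)])
  moreover have "\<forall>e1\<in>P. \<forall>e2\<in>P. e1 \<noteq> e2 \<longrightarrow> e1 \<inter> e2 = {}" using b assms(2) by (meson subsetD)
  ultimately show ?thesis unfolding matching_def by blast
qed

lemma chain_pm:
  assumes cV: "countable V" and I0: "Inv {}"
    and step: "\<And>P v. Inv P \<Longrightarrow> v \<in> V \<Longrightarrow> \<exists>P'. Inv P' \<and> P \<subseteq> P' \<and> (\<exists>e\<in>P'. v \<in> e)"
    and mat: "\<And>P. Inv P \<Longrightarrow> matching E P"
  shows "\<exists>M. perfect_matching V E M"
proof (cases "V = {}")
  case True
  then show ?thesis by (auto simp: perfect_matching_def)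
next
  case False
  define en where "en = from_nat_into V"
  have rng: "range en = V" using False cV by (simp add: en_def)
  define nxt where "nxt P n = (SOME P'. Inv P' \<and> P \<subseteq> P' \<and> (\<exists>e\<in>P'. en n \<in> e))" for P n
  define Ps where "Ps n = rec_nat {} (\<lambda>n P. nxt P n) n" for n
  have Ps0: "Ps 0 = {}" by (simp add: Ps_def)
  have PsS: "Ps (Suc n) = nxt (Ps n) n" for n by (simp add: Ps_def)
  have nxt: "Inv (nxt P n) \<and> P \<subseteq> nxt P n \<and> (\<exists>e\<in>nxt P n. en n \<in> e)" if "Inv P" for P n
  proof -
    have "en n \<in> V" using rng by auto
    then have "\<exists>P'. Inv P' \<and> P \<subseteq> P' \<and> (\<exists>e\<in>P'. en n \<in> e)" using step that by blast
    then show ?thesis unfolding nxt_def by (rule someI_ex)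
  qed
  have inv: "Inv (Ps n)" for n
    by (induction n) (use I0 nxt in \<open>auto simp: Ps0 PsS\<close>)
  have sucm: "Ps n \<subseteq> Ps (Suc n)" for n using nxt[OF inv[of n]] by (simp add: PsS)
  have mono: "Ps m \<subseteq> Ps n" if "m \<le> n" for m n
    using lift_Suc_mono_le[of Ps, OF sucm that] .
  have cov: "\<exists>e\<in>Ps (Suc n). en n \<in> e" for n using nxt[OF inv[of n]] by (simp add: PsS)
  define M where "M = (\<Union>n. Ps n)"
  have "perfect_matching V E M" unfolding perfect_matching_def
  proof (intro conjI)
    show "\<forall>e\<in>M. \<exists>u v. e = {u, v} \<and> u \<noteq> v \<and> E u v"
      using mat[OF inv] unfolding M_def matching_def by blast
    show "\<forall>e1\<in>M. \<forall>e2\<in>M. e1 \<noteq> e2 \<longrightarrow> e1 \<inter> e2 = {}"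
    proof (intro ballI impI)
      fix e1 e2 assume e1: "e1 \<in> M" and e2: "e2 \<in> M" and ne: "e1 \<noteq> e2"
      obtain m where m: "e1 \<in> Ps m" using e1 by (auto simp: M_def)
      obtain n where n: "e2 \<in> Ps n" using e2 by (auto simp: M_def)
      have "e1 \<in> Ps (max m n)" using m mono[of m "max m n"] by auto
      moreover have "e2 \<in> Ps (max m n)" using n mono[of n "max m n"] by auto
      ultimately have "e1 \<in> Ps (max m n)" "e2 \<in> Ps (max m n)" by auto
      then show "e1 \<inter> e2 = {}" using mat[OF inv[of "max m n"]] ne unfolding matching_def by blast
    qed
    show "\<forall>v\<in>V. \<exists>e\<in>M. v \<in> e"
    proof
      fix v assume "v \<in> V"
      then obtain n where "v = en n" using rng by auto
      then show "\<exists>e\<in>M. v \<in> e" using cov[of n] by (auto simp: M_def)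
    qed
  qed
  then show ?thesis by blast
qed

lemma compact_pm:
  assumes g: "graph V E" and cV: "countable V"
    and lf: "\<And>v. v \<in> V \<Longrightarrow> finite (nbr E v)"
    and fc: "\<And>F. finite F \<Longrightarrow> F \<subseteq> V \<Longrightarrow> \<exists>M. matching E M \<and> covers M F"
  shows "\<exists>M. perfect_matching V E M"
proof -
  define Inv where "Inv P \<longleftrightarrow> (\<forall>F. finite F \<longrightarrow> F \<subseteq> V \<longrightarrow> (\<exists>M. matching E M \<and> P \<subseteq> M \<and> covers M F))" for P
  have Esym: "\<And>a b. E a b \<Longrightarrow> E b a" using g by (auto simp: graph_def)
  have EV: "\<And>a b. E a b \<Longrightarrow> b \<in> V" using g by (auto simp: graph_def)
  show ?thesis
  proof (rule chain_pm[of V Inv])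
    show "countable V" by fact
    show "Inv {}" using fc by (auto simp: Inv_def)
    show "matching E P" if IP: "Inv P" for P
    proof -
      have "\<exists>M. matching E M \<and> P \<subseteq> M \<and> covers M {}" using IP unfolding Inv_def by blast
      then obtain M where "matching E M" "P \<subseteq> M" by blast
      then show ?thesis by (rule matching_subset)
    qed
    show "\<exists>P'. Inv P' \<and> P \<subseteq> P' \<and> (\<exists>e\<in>P'. v \<in> e)" if I: "Inv P" and v: "v \<in> V" for P v
    proof (cases "\<exists>e\<in>P. v \<in> e")
      case True then show ?thesis using I by blast
    next
      case False
      define Cand where "Cand = (\<lambda>u. {v, u}) ` nbr E v"
      have finC: "finite Cand" using lf[OF v] by (simp add: Cand_def)
      have "\<exists>e\<in>Cand. Inv (insert e P)"
      proof (rule ccontr)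
        assume nc: "\<not> ?thesis"
        define ok where "ok e F \<longleftrightarrow> (\<exists>M. matching E M \<and> insert e P \<subseteq> M \<and> covers M F)" for e F
        have IE: "Inv (insert e P) \<longleftrightarrow> (\<forall>F. finite F \<longrightarrow> F \<subseteq> V \<longrightarrow> ok e F)" for e
          unfolding Inv_def ok_def by (rule refl)
        have "\<forall>e\<in>Cand. \<exists>F. finite F \<and> F \<subseteq> V \<and> \<not> ok e F"
          using nc unfolding IE by blast
        then obtain Fs where Fs0: "\<forall>e\<in>Cand. finite (Fs e) \<and> Fs e \<subseteq> V \<and> \<not> ok e (Fs e)"
          by (rule bchoice[elim_format]) blast
        have Fs: "\<forall>e\<in>Cand. finite (Fs e) \<and> Fs e \<subseteq> V \<and> \<not> (\<exists>M. matching E M \<and> insert e P \<subseteq> M \<and> covers M (Fs e))"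
          using Fs0 unfolding ok_def by blast
        define F where "F = insert v (\<Union>(Fs ` Cand))"
        have Fs1: "\<forall>e\<in>Cand. finite (Fs e) \<and> Fs e \<subseteq> V" using Fs by blast
        have "finite F" using Fs1 finC by (auto simp: F_def)
        moreover have "F \<subseteq> V" using Fs1 v by (auto simp: F_def)
        ultimately obtain M where M: "matching E M" "P \<subseteq> M" "covers M F" using I unfolding Inv_def by blast
        obtain e0 where e0: "e0 \<in> M" "v \<in> e0" using M(3) by (auto simp: covers_def F_def)
        obtain a b where ab: "e0 = {a, b}" "a \<noteq> b" "E a b" using M(1) e0(1) by (auto simp: matching_def)
        have "\<exists>u. e0 = {v, u} \<and> u \<noteq> v \<and> E v u"
        proof (cases "v = a")
          case True then show ?thesis using ab by blast
        next
          case False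
          then have "v = b" using ab(1) e0(2) by blast
          then have "e0 = {v, a} \<and> a \<noteq> v \<and> E v a" using ab Esym by (simp add: insert_commute)
          then show ?thesis by blast
        qed
        then obtain u where u: "e0 = {v, u}" "u \<noteq> v" "E v u" by blast
        have "u \<in> nbr E v" using u by (simp add: nbr_def)
        then have eC: "e0 \<in> Cand" using u by (simp add: Cand_def)
        have "covers M (Fs e0)" using M(3) eC by (auto simp: covers_def F_def)
        moreover have "insert e0 P \<subseteq> M" using M(2) e0(1) by simp
        moreover have nF: "\<not> (\<exists>M. matching E M \<and> insert e0 P \<subseteq> M \<and> covers M (Fs e0))"
          using bspec[OF Fs eC] by blast
        ultimately show False using M(1) by blast
      qed
      then obtain e where e: "e \<in> Cand" "Inv (insert e P)" by blast
      have "v \<in> e" using e(1) by (auto simp: Cand_def)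
      then show ?thesis using e by blast
    qed
  qed
qed

lemma greedy_pm:
  assumes g: "graph V E" and cV: "countable V"
    and inf: "\<And>v. v \<in> V \<Longrightarrow> infinite (nbr E v)"
  shows "\<exists>M. perfect_matching V E M"
proof -
  define Inv where "Inv P \<longleftrightarrow> finite P \<and> matching E P" for P
  show ?thesis
  proof (rule chain_pm[of V Inv])
    show "countable V" by fact
    show "Inv {}" by (simp add: Inv_def matching_def)
    show "matching E P" if "Inv P" for P using that by (simp add: Inv_def)
    show "\<exists>P'. Inv P' \<and> P \<subseteq> P' \<and> (\<exists>e\<in>P'. v \<in> e)" if I: "Inv P" and v: "v \<in> V" for P v
    proof (cases "\<exists>e\<in>P. v \<in> e")
      case True then show ?thesis using I by blast
    next
      case False
      have finE: "finite e" if "e \<in> P" for e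
        using I that by (auto simp: Inv_def matching_def)
      have finU: "finite (\<Union>P)" using I finE by (auto simp: Inv_def)
      have "infinite (nbr E v - \<Union>P)" using inf[OF v] finU by (metis Diff_infinite_finite)
      then obtain u where u: "u \<in> nbr E v" "u \<notin> \<Union>P" by (metis Diff_iff ex_in_conv finite.emptyI)
      have vU: "v \<notin> \<Union>P" using False by auto
      define P' where "P' = insert {v, u} P"
      have "matching E P'" unfolding matching_def
      proof (intro conjI ballI impI)
        fix e assume "e \<in> P'"
        then show "\<exists>a b. e = {a, b} \<and> a \<noteq> b \<and> E a b"
          using u I by (auto simp: P'_def nbr_def Inv_def matching_def)
      next
        fix e1 e2 assume e1: "e1 \<in> P'" and e2: "e2 \<in> P'" and ne: "e1 \<noteq> e2"
        show "e1 \<inter> e2 = {}"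
          using e1 e2 ne I u(2) vU unfolding P'_def Inv_def matching_def by blast
      qed
      then have "Inv P'" using I by (simp add: Inv_def P'_def)
      then show ?thesis by (auto simp: P'_def)
    qed
  qed
qed

definition bd :: "('a \<Rightarrow> 'a \<Rightarrow> bool) \<Rightarrow> 'a set \<Rightarrow> ('a \<times> 'a) set" where
  "bd E K = {(k, u). k \<in> K \<and> u \<notin> K \<and> E k u}"

definition outs :: "('a \<Rightarrow> 'a \<Rightarrow> bool) \<Rightarrow> 'a \<Rightarrow> 'a set \<Rightarrow> 'a set" where
  "outs E x K = {u. E x u \<and> u \<notin> K}"

lemma aut_nbr:
  assumes g: "graph V E" and f: "graph_automorphism V E f" and x: "x \<in> V"
  shows "f ` nbr E x = nbr E (f x)"
proof -
  have bij: "bij_betw f V V" and pres: "\<And>u v. u \<in> V \<Longrightarrow> v \<in> V \<Longrightarrow> E (f u) (f v) \<longleftrightarrow> E u v"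
    using f by (auto simp: graph_automorphism_def)
  have inj: "inj_on f V" using bij by (simp add: bij_betw_def)
  have EV: "\<And>a b. E a b \<Longrightarrow> b \<in> V" using g by (auto simp: graph_def)
  show ?thesis
  proof
    show "f ` nbr E x \<subseteq> nbr E (f x)"
    proof
      fix y assume "y \<in> f ` nbr E x"
      then obtain u where u: "u \<in> nbr E x" "y = f u" by auto
      have uV: "u \<in> V" using u EV by (auto simp: nbr_def)
      have "E (f x) (f u)" using pres[OF x uV] u by (auto simp: nbr_def)
      moreover have "f u \<noteq> f x" using inj x uV u by (auto simp: nbr_def dest: inj_onD)
      ultimately show "y \<in> nbr E (f x)" using u by (simp add: nbr_def)
    qed
    show "nbr E (f x) \<subseteq> f ` nbr E x"
    proof
      fix y assume y: "y \<in> nbr E (f x)"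
      then have yV: "y \<in> V" using EV by (auto simp: nbr_def)
      then obtain u where u: "u \<in> V" "y = f u" using bij by (metis bij_betw_imp_surj_on imageE)
      have "E x u" using pres[OF x u(1)] y u by (auto simp: nbr_def)
      moreover have "u \<noteq> x" using y u by (auto simp: nbr_def)
      ultimately show "y \<in> f ` nbr E x" using u by (auto simp: nbr_def)
    qed
  qed
qed

lemma aut_card_nbr:
  assumes g: "graph V E" and f: "graph_automorphism V E f" and x: "x \<in> V"
  shows "card (nbr E (f x)) = card (nbr E x)" "finite (nbr E (f x)) \<longleftrightarrow> finite (nbr E x)"
proof -
  have inj: "inj_on f V" using f by (auto simp: graph_automorphism_def bij_betw_def)
  have sub: "nbr E x \<subseteq> V" using g by (auto simp: nbr_def graph_def)
  have inj2: "inj_on f (nbr E x)" using inj sub by (rule inj_on_subset)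
  show "card (nbr E (f x)) = card (nbr E x)"
    using aut_nbr[OF g f x] card_image[OF inj2] by simp
  show "finite (nbr E (f x)) \<longleftrightarrow> finite (nbr E x)"
    using aut_nbr[OF g f x] finite_image_iff[OF inj2] by simp
qed

locale vtlf =
  fixes V :: "'a set" and E :: "'a \<Rightarrow> 'a \<Rightarrow> bool" and d :: nat
  assumes g: "graph V E" and conn: "connected_graph V E" and vt: "vertex_transitive V E"
    and infV: "infinite V"
    and lf: "\<And>v. v \<in> V \<Longrightarrow> finite (nbr E v)"
    and reg: "\<And>v. v \<in> V \<Longrightarrow> card (nbr E v) = d"
begin

lemma EV: "E a b \<Longrightarrow> a \<in> V \<and> b \<in> V" using g by (auto simp: graph_def)
lemma Esym: "E a b \<Longrightarrow> E b a" using g by (auto simp: graph_def)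

definition good :: "'a set \<Rightarrow> bool" where
  "good K \<longleftrightarrow> finite K \<and> K \<noteq> {} \<and> K \<subseteq> V"

lemma bd_sub: "bd E K \<subseteq> Sigma K (nbr E)"
  by (auto simp: bd_def nbr_def)

lemma fin_bd: assumes "good K" shows "finite (bd E K)"
proof -
  have "finite (Sigma K (nbr E))" using assms lf by (intro finite_SigmaI) (auto simp: good_def)
  then show ?thesis using bd_sub by (rule finite_subset[rotated])
qed

lemma submod:
  assumes "good A" "good B"
  shows "card (bd E (A \<inter> B)) + card (bd E (A \<union> B)) \<le> card (bd E A) + card (bd E B)"
proof -
  let ?X1 = "bd E (A \<inter> B)" and ?X2 = "bd E (A \<union> B)"
  have fA: "finite (bd E A)" and fB: "finite (bd E B)" using fin_bd assms by auto
  have u: "?X1 \<union> ?X2 \<subseteq> bd E A \<union> bd E B" by (auto simp: bd_def)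
  have i: "?X1 \<inter> ?X2 \<subseteq> bd E A \<inter> bd E B" by (auto simp: bd_def)
  have f1: "finite ?X1" "finite ?X2" using u fA fB by (meson finite_Un finite_subset le_supE)+
  have "card ?X1 + card ?X2 = card (?X1 \<union> ?X2) + card (?X1 \<inter> ?X2)"
    using card_Un_Int[OF f1] .
  also have "\<dots> \<le> card (bd E A \<union> bd E B) + card (bd E A \<inter> bd E B)"
    using u i fA fB by (intro add_mono card_mono) auto
  also have "\<dots> = card (bd E A) + card (bd E B)"
    using card_Un_Int[OF fA fB] by simp
  finally show ?thesis .
qed

lemma aut_bd:
  assumes f: "graph_automorphism V E f" and K: "K \<subseteq> V"
  shows "card (bd E (f ` K)) = card (bd E K)"
proof -
  have bij: "bij_betw f V V" and pres: "\<And>u v. u \<in> V \<Longrightarrow> v \<in> V \<Longrightarrow> E (f u) (f v) \<longleftrightarrow> E u v"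
    using f by (auto simp: graph_automorphism_def)
  have inj: "inj_on f V" using bij by (simp add: bij_betw_def)
  define h where "h = (\<lambda>(a, b). (f a, f b))"
  have bdV: "bd E K \<subseteq> V \<times> V" using EV by (auto simp: bd_def)
  have injh: "inj_on h (bd E K)"
    unfolding h_def using inj bdV by (auto simp: inj_on_def)
  have "h ` bd E K = bd E (f ` K)"
  proof
    show "h ` bd E K \<subseteq> bd E (f ` K)"
    proof
      fix t assume "t \<in> h ` bd E K"
      then obtain k u where ku: "k \<in> K" "u \<notin> K" "E k u" "t = (f k, f u)"
        by (auto simp: h_def bd_def)
      have kV: "k \<in> V" and uV: "u \<in> V" using EV[OF ku(3)] by auto
      have "f u \<notin> f ` K"
      proof
        assume "f u \<in> f ` K"
        then obtain k' where "k' \<in> K" "f u = f k'" by auto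
        then have "u = k'" using inj uV K by (auto dest: inj_onD)
        then show False using ku \<open>k' \<in> K\<close> by simp
      qed
      moreover have "E (f k) (f u)" using pres[OF kV uV] ku by simp
      ultimately show "t \<in> bd E (f ` K)" using ku by (auto simp: bd_def)
    qed
    show "bd E (f ` K) \<subseteq> h ` bd E K"
    proof
      fix t assume "t \<in> bd E (f ` K)"
      then obtain k u' where ku: "k \<in> K" "u' \<notin> f ` K" "E (f k) u'" "t = (f k, u')"
        by (auto simp: bd_def)
      have u'V: "u' \<in> V" using EV[OF ku(3)] by auto
      then obtain u where u: "u \<in> V" "u' = f u" using bij by (metis bij_betw_imp_surj_on imageE)
      have kV: "k \<in> V" using K ku by auto
      have "u \<notin> K" using ku u by auto
      moreover have "E k u" using pres[OF kV u(1)] ku u by simp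
      ultimately show "t \<in> h ` bd E K" using ku u by (auto simp: h_def bd_def image_iff)
    qed
  qed
  then show ?thesis using card_image[OF injh] by simp
qed

definition lam :: nat where "lam = (LEAST n. \<exists>K. good K \<and> card (bd E K) = n)"

lemma Vne: "V \<noteq> {}" using infV by auto

lemma lam_ex: "\<exists>K. good K \<and> card (bd E K) = lam"
proof -
  obtain v where "v \<in> V" using Vne by auto
  then have "good {v}" by (simp add: good_def)
  then have "\<exists>n K. good K \<and> card (bd E K) = n" by blast
  then show ?thesis unfolding lam_def by (rule LeastI2_ex) blast
qed

lemma lam_le: "good K \<Longrightarrow> lam \<le> card (bd E K)"
  unfolding lam_def by (rule Least_le) blast

definition amin :: nat where "amin = (LEAST m. \<exists>A. good A \<and> card (bd E A) = lam \<and> card A = m)"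

definition atom :: "'a set \<Rightarrow> bool" where
  "atom A \<longleftrightarrow> good A \<and> card (bd E A) = lam \<and> card A = amin"

lemma atom_ex: "\<exists>A. atom A"
proof -
  have "\<exists>m A. good A \<and> card (bd E A) = lam \<and> card A = m" using lam_ex by blast
  then have "\<exists>A. good A \<and> card (bd E A) = lam \<and> card A = amin"
    unfolding amin_def by (rule LeastI2_ex) blast
  then show ?thesis by (simp add: atom_def)
qed

lemma amin_le: "good A \<Longrightarrow> card (bd E A) = lam \<Longrightarrow> amin \<le> card A"
  unfolding amin_def by (rule Least_le) blast

lemma atom_eq:
  assumes A: "atom A" and B: "atom B" and AB: "A \<inter> B \<noteq> {}"
  shows "A = B"
proof -
  have gA: "good A" and gB: "good B" using A B by (auto simp: atom_def)
  have gI: "good (A \<inter> B)" using gA AB by (auto simp: good_def)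
  have gU: "good (A \<union> B)" using gA gB by (auto simp: good_def)
  have "card (bd E (A \<inter> B)) + card (bd E (A \<union> B)) \<le> lam + lam"
    using submod[OF gA gB] A B by (simp add: atom_def)
  moreover have "lam \<le> card (bd E (A \<union> B))" by (rule lam_le[OF gU])
  moreover have "lam \<le> card (bd E (A \<inter> B))" by (rule lam_le[OF gI])
  ultimately have "card (bd E (A \<inter> B)) = lam" by linarith
  then have am: "amin \<le> card (A \<inter> B)" by (rule amin_le[OF gI])
  have fA: "finite A" and fB: "finite B" using gA gB by (auto simp: good_def)
  have "card (A \<inter> B) \<le> card A" "card (A \<inter> B) \<le> card B" using fA fB by (auto intro: card_mono)
  then have "card (A \<inter> B) = card A" "card (A \<inter> B) = card B" using am A B by (auto simp: atom_def)
  then have "A \<inter> B = A" "A \<inter> B = B"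
    using card_subset_eq[OF fA, of "A \<inter> B"] card_subset_eq[OF fB, of "A \<inter> B"] by auto
  then show ?thesis by simp
qed

lemma atom_aut:
  assumes A: "atom A" and f: "graph_automorphism V E f"
  shows "atom (f ` A)"
proof -
  have gA: "good A" using A by (simp add: atom_def)
  have inj: "inj_on f V" using f by (auto simp: graph_automorphism_def bij_betw_def)
  have AV: "A \<subseteq> V" using gA by (simp add: good_def)
  have fV: "f ` V \<subseteq> V" using f by (auto simp: graph_automorphism_def bij_betw_def)
  have "good (f ` A)" using gA fV by (auto simp: good_def)
  moreover have "card (bd E (f ` A)) = lam" using aut_bd[OF f AV] A by (simp add: atom_def)
  moreover have "card (f ` A) = amin" using card_image[OF inj_on_subset[OF inj AV]] A by (simp add: atom_def)
  ultimately show ?thesis by (simp add: atom_def)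
qed

lemma outs_aut:
  assumes f: "graph_automorphism V E f" and x: "x \<in> V" and A: "A \<subseteq> V"
  shows "card (outs E (f x) (f ` A)) = card (outs E x A)"
proof -
  have bij: "bij_betw f V V" and pres: "\<And>u v. u \<in> V \<Longrightarrow> v \<in> V \<Longrightarrow> E (f u) (f v) \<longleftrightarrow> E u v"
    using f by (auto simp: graph_automorphism_def)
  have inj: "inj_on f V" using bij by (simp add: bij_betw_def)
  have oV: "outs E x A \<subseteq> V" using EV by (auto simp: outs_def)
  have "f ` outs E x A = outs E (f x) (f ` A)"
  proof
    show "f ` outs E x A \<subseteq> outs E (f x) (f ` A)"
    proof
      fix t assume "t \<in> f ` outs E x A"
      then obtain u where u: "E x u" "u \<notin> A" "t = f u" by (auto simp: outs_def)
      have uV: "u \<in> V" using EV[OF u(1)] by auto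
      have "f u \<notin> f ` A"
      proof
        assume "f u \<in> f ` A"
        then obtain a where "a \<in> A" "f u = f a" by auto
        then have "u = a" using inj uV A by (auto dest: inj_onD)
        then show False using u \<open>a \<in> A\<close> by simp
      qed
      then show "t \<in> outs E (f x) (f ` A)" using pres[OF x uV] u by (simp add: outs_def)
    qed
    show "outs E (f x) (f ` A) \<subseteq> f ` outs E x A"
    proof
      fix t assume t: "t \<in> outs E (f x) (f ` A)"
      then have tV: "t \<in> V" using EV by (auto simp: outs_def)
      then obtain u where u: "u \<in> V" "t = f u" using bij by (metis bij_betw_imp_surj_on imageE)
      have "E x u" using pres[OF x u(1)] t u by (simp add: outs_def)
      moreover have "u \<notin> A" using t u by (auto simp: outs_def)
      ultimately show "t \<in> f ` outs E x A" using u by (auto simp: outs_def)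
    qed
  qed
  then show ?thesis using card_image[OF inj_on_subset[OF inj oV]] by simp
qed

lemma mader: assumes K: "good K" shows "d \<le> card (bd E K)"
proof -
  obtain A where A: "atom A" using atom_ex by blast
  have gA: "good A" using A by (simp add: atom_def)
  have fA: "finite A" and AV: "A \<subseteq> V" and Ane: "A \<noteq> {}" using gA by (auto simp: good_def)
  obtain a0 where a0: "a0 \<in> A" using Ane by auto
  define r where "r = card (outs E a0 A)"
  have rall: "card (outs E x A) = r" if x: "x \<in> A" for x
  proof -
    have a0V: "a0 \<in> V" and xV: "x \<in> V" using a0 x AV by auto
    obtain f where f: "graph_automorphism V E f" "f a0 = x" using vt a0V xV by (auto simp: vertex_transitive_def)
    have "atom (f ` A)" by (rule atom_aut[OF A f(1)])
    moreover have "x \<in> f ` A" using f(2) a0 by blast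
    ultimately have "f ` A = A" using atom_eq A x by blast
    then show ?thesis using outs_aut[OF f(1) a0V AV] f(2) by (simp add: r_def)
  qed
  have bdS: "bd E A = Sigma A (\<lambda>x. outs E x A)" by (auto simp: bd_def outs_def)
  have outsub: "outs E x A \<subseteq> nbr E x" if "x \<in> A" for x using that by (auto simp: outs_def nbr_def)
  have finout: "finite (outs E x A)" if "x \<in> A" for x
    using outsub[OF that] lf that AV by (meson finite_subset subsetD)
  have cbd: "card (bd E A) = r * card A"
    unfolding bdS using finout rall fA by (simp add: card_SigmaI)
  have r0: "r \<noteq> 0"
  proof
    assume r0: "r = 0"
    have cl: "u \<in> A" if "x \<in> A" "E x u" for x u
    proof (rule ccontr)
      assume "u \<notin> A"
      then have "u \<in> outs E x A" using that by (simp add: outs_def)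
      then have "outs E x A \<noteq> {}" by auto
      then show False using rall[OF that(1)] r0 finout[OF that(1)] by simp
    qed
    have "v \<in> A" if "v \<in> V" for v
    proof -
      have "E\<^sup>*\<^sup>* a0 v" using conn a0 AV that by (auto simp: connected_graph_def)
      then show ?thesis by (induction rule: rtranclp_induct) (use a0 cl in auto)
    qed
    then have "V \<subseteq> A" by blast
    then show False using fA infV finite_subset by blast
  qed
  have dA: "d \<le> r + (card A - 1)"
  proof -
    have a0V: "a0 \<in> V" using a0 AV by auto
    have split: "nbr E a0 = outs E a0 A \<union> (nbr E a0 \<inter> A)" using outsub[OF a0] by (auto simp: outs_def nbr_def)
    have "card (nbr E a0) \<le> card (outs E a0 A) + card (nbr E a0 \<inter> A)"
      by (subst split) (rule card_Un_le)
    moreover have "nbr E a0 \<inter> A \<subseteq> A - {a0}" by (auto simp: nbr_def)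
    then have "card (nbr E a0 \<inter> A) \<le> card (A - {a0})" using fA by (intro card_mono) auto
    moreover have "card (A - {a0}) = card A - 1" using a0 fA by simp
    ultimately show ?thesis using reg[OF a0V] by (simp add: r_def)
  qed
  have rd: "r \<le> d"
  proof -
    have a0V: "a0 \<in> V" using a0 AV by auto
    have "card (outs E a0 A) \<le> card (nbr E a0)" using outsub[OF a0] lf[OF a0V] by (rule card_mono[rotated])
    then show ?thesis using reg[OF a0V] by (simp add: r_def)
  qed
  have cA: "card A \<ge> 1" using fA Ane by (simp add: Suc_le_eq card_gt_0_iff)
  have "d \<le> r * card A"
  proof -
    obtain s where s: "r = Suc s" using r0 by (cases r) auto
    obtain c where c: "card A = Suc c" using cA by (cases "card A") auto
    have "d \<le> Suc s + c" using dA s c by simp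
    moreover have "Suc s + c \<le> Suc s * Suc c" by simp
    ultimately have "d \<le> Suc s * Suc c" by linarith
    then show ?thesis using s c by simp
  qed
  also have "\<dots> = lam" using cbd A unfolding atom_def by metis
  also have "\<dots> \<le> card (bd E K)" by (rule lam_le[OF K])
  finally show ?thesis .
qed

end

lemma parity_arith:
  fixes a q s y x :: nat
  assumes "a \<le> q + 1" "q \<le> s" "even y \<longleftrightarrow> even a" "y = x - s" "s \<le> x" "even x"
  shows "a \<le> s"
  using assms by presburger

context vtlf
begin

lemma d_pos: "d \<ge> 1"
proof (rule ccontr)
  assume "\<not> d \<ge> 1"
  then have d0: "d = 0" by simp
  have empty: "nbr E x = {}" if "x \<in> V" for x using reg[OF that] lf[OF that] d0 by simp
  obtain v where v: "v \<in> V" using Vne by auto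
  obtain u where u: "u \<in> V" "u \<noteq> v" using infV v
    by (metis finite.emptyI finite.insertI insert_iff subsetI finite_subset)
  have "E\<^sup>*\<^sup>* v u" using conn v u by (auto simp: connected_graph_def)
  then have "u = v"
  proof (induction rule: rtranclp_induct)
    case base then show ?case by simp
  next
    case (step y z)
    have "y \<in> V" using EV[OF step(2)] by simp
    then have "z = y" using empty[of y] step(2) by (auto simp: nbr_def)
    then show ?case using step by simp
  qed
  then show False using u by simp
qed

lemma cover:
  assumes finF: "finite F" and FV: "F \<subseteq> V"
  shows "\<exists>M. matching E M \<and> covers M F"
proof -
  define B where "B = F \<union> \<Union>(nbr E ` F)"
  have finB: "finite B" using finF lf FV by (auto simp: B_def)
  have BV: "B \<subseteq> V" using FV EV by (auto simp: B_def nbr_def)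
  obtain X where X: "finite X" "X \<subseteq> V" "even (card X)" "F \<subseteq> X" "\<And>f. f \<in> F \<Longrightarrow> nbr E f \<subseteq> X"
  proof (cases "even (card B)")
    case True then show ?thesis using that[of B] finB BV by (auto simp: B_def)
  next
    case False
    have "infinite (V - B)" using infV finB by (simp add: Diff_infinite_finite)
    then obtain z where z: "z \<in> V" "z \<notin> B" by (metis Diff_iff finite.emptyI ex_in_conv)
    have "even (card (insert z B))" using False z finB by simp
    then show ?thesis using that[of "insert z B"] finB BV z by (auto simp: B_def)
  qed
  define R where "R u v \<longleftrightarrow> u \<in> X \<and> v \<in> X \<and> u \<noteq> v \<and> ((E u v \<and> (u \<in> F \<or> v \<in> F)) \<or> (u \<notin> F \<and> v \<notin> F))" for u v
  have sg: "sgraph X R" unfolding sgraph_def R_def using Esym by blast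
  have sym: "symp R" using sg by (rule sgraph_symp)
  have tt: "tutte X R" unfolding tutte_def
  proof (intro allI impI)
    fix S assume SX: "S \<subseteq> X"
    let ?Y = "X - S"
    have finY: "finite ?Y" using X(1) by simp
    define Q where "Q = {C \<in> comps ?Y R. C \<subseteq> F}"
    define W where "W = {C \<in> comps ?Y R. \<not> C \<subseteq> F}"
    have finK: "finite (comps ?Y R)" using finY by (rule comps_finite)
    have finQ: "finite Q" and finW: "finite W" using finK by (auto simp: Q_def W_def)
    have W1: "card W \<le> 1"
    proof -
      have "C1 = C2" if C1: "C1 \<in> W" and C2: "C2 \<in> W" for C1 C2
      proof -
        obtain a where a: "a \<in> C1" "a \<notin> F" using C1 by (auto simp: W_def)
        obtain b where b: "b \<in> C2" "b \<notin> F" using C2 by (auto simp: W_def)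
        have K1: "C1 \<in> comps ?Y R" and K2: "C2 \<in> comps ?Y R" using C1 C2 by (auto simp: W_def)
        have aY: "a \<in> ?Y" and bY: "b \<in> ?Y" using a b K1 K2 comps_sub by blast+
        have "b \<in> gcomp ?Y R a"
        proof (cases "a = b")
          case True then show ?thesis using aY by (simp add: comp_self)
        next
          case False
          then have "R a b" using a b aY bY by (simp add: R_def)
          then have "rin ?Y R a b" using aY bY by (simp add: rin_def)
          then show ?thesis by (simp add: gcomp_def)
        qed
        moreover have "gcomp ?Y R a = C1"
        proof -
          obtain c where c: "c \<in> ?Y" "C1 = gcomp ?Y R c" using K1 by (auto simp: comps_def)
          then show ?thesis using comp_eq[OF sym] a by blast
        qed
        ultimately have "b \<in> C1" by simp
        then show ?thesis using comps_disjoint[OF sym K1 K2] b by blast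
      qed
      then show ?thesis using finW by (simp add: card_le_Suc0_iff_eq)
    qed
    have oQW: "oddc ?Y R \<subseteq> Q \<union> W" by (auto simp: oddc_def Q_def W_def)
    have c1: "card (oddc ?Y R) \<le> card Q + 1"
    proof -
      have "card (oddc ?Y R) \<le> card (Q \<union> W)" using oQW finQ finW by (intro card_mono) auto
      also have "\<dots> \<le> card Q + card W" by (rule card_Un_le)
      finally show ?thesis using W1 by simp
    qed
    have c2: "card Q \<le> card S"
    proof -
      have KQ: "C \<in> comps ?Y R" "C \<subseteq> F" if "C \<in> Q" for C using that by (auto simp: Q_def)
      have bdS: "bd E C \<subseteq> {(k, s). s \<in> S \<and> k \<in> nbr E s}" if CQ: "C \<in> Q" for C
      proof
        fix t assume t: "t \<in> bd E C"
        then obtain k u where ku: "t = (k, u)" "k \<in> C" "u \<notin> C" "E k u" by (auto simp: bd_def)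
        have kF: "k \<in> F" using ku KQ[OF CQ] by auto
        have kY: "k \<in> ?Y" using ku KQ[OF CQ] comps_sub by blast
        have uk: "u \<noteq> k" using ku by auto
        have uX: "u \<in> X" using X(5)[OF kF] ku uk by (auto simp: nbr_def)
        have uS: "u \<in> S"
        proof (rule ccontr)
          assume "u \<notin> S"
          then have uY: "u \<in> ?Y" using uX by simp
          have "R k u" using kF uk ku X(4) uX by (auto simp: R_def)
          then have "rin ?Y R k u" using kY uY by (simp add: rin_def)
          then have "u \<in> gcomp ?Y R k" by (simp add: gcomp_def)
          moreover have "gcomp ?Y R k = C"
          proof -
            obtain c where c: "c \<in> ?Y" "C = gcomp ?Y R c" using KQ[OF CQ] by (auto simp: comps_def)
            then show ?thesis using comp_eq[OF sym] ku by blast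
          qed
          ultimately show False using ku by simp
        qed
        then show "t \<in> {(k, s). s \<in> S \<and> k \<in> nbr E s}" using ku Esym uk by (auto simp: nbr_def)
      qed
      have goodC: "good C" if CQ: "C \<in> Q" for C
      proof -
        have "C \<subseteq> F" "C \<noteq> {}" using KQ[OF CQ] comps_nonempty by auto
        then show ?thesis using finF FV by (auto simp: good_def intro: finite_subset)
      qed
      define T where "T = {(k, s). s \<in> S \<and> k \<in> nbr E s}"
      have SV: "S \<subseteq> V" using SX X(2) by auto
      have finS: "finite S" using SX X(1) finite_subset by blast
      have Tim: "T = (\<lambda>(s, k). (k, s)) ` Sigma S (nbr E)" by (auto simp: T_def)
      have cT: "card T \<le> d * card S"
      proof -
        have "card T \<le> card (Sigma S (nbr E))" unfolding Tim by (rule card_image_le) (use finS lf SV in auto)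
        also have "\<dots> = (\<Sum>s\<in>S. card (nbr E s))" using finS lf SV by (intro card_SigmaI) auto
        also have "\<dots> = d * card S" using reg SV by (simp add: subset_iff)
        finally show ?thesis .
      qed
      have finT: "finite T" unfolding Tim using finS lf SV by (intro finite_imageI finite_SigmaI) auto
      have disj: "bd E C1 \<inter> bd E C2 = {}" if "C1 \<in> Q" "C2 \<in> Q" "C1 \<noteq> C2" for C1 C2
      proof -
        have "C1 \<inter> C2 = {}" using comps_disjoint[OF sym] KQ that by blast
        then show ?thesis by (auto simp: bd_def)
      qed
      have "d * card Q = (\<Sum>C\<in>Q. d)" by simp
      also have "\<dots> \<le> (\<Sum>C\<in>Q. card (bd E C))" using mader goodC by (intro sum_mono) auto
      also have "\<dots> = card (\<Union>C\<in>Q. bd E C)"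
        by (rule card_UN_disjoint[symmetric]) (use finQ fin_bd goodC disj in auto)
      also have "\<dots> \<le> card T" using bdS finT unfolding T_def by (intro card_mono) auto
      also have "\<dots> \<le> d * card S" by (rule cT)
      finally have "d * card Q \<le> d * card S" .
      then show ?thesis using d_pos by simp
    qed
    have par: "even (card ?Y) \<longleftrightarrow> even (card (oddc ?Y R))" by (rule parity_comps[OF sym finY])
    have cY: "card ?Y = card X - card S" using SX X(1) by (simp add: card_Diff_subset finite_subset)
    have cSX: "card S \<le> card X" using SX X(1) by (simp add: card_mono)
    show "card (oddc ?Y R) \<le> card S" by (rule parity_arith[OF c1 c2 par cY cSX X(3)])
  qed
  obtain p where p: "ipm X R p" using tutte_pm[OF X(1) sg tt] by blast
  define M where "M = (\<lambda>f. {f, p f}) ` F"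
  have pf: "p f \<noteq> f \<and> p (p f) = f \<and> E f (p f)" if fF: "f \<in> F" for f
  proof -
    have fX: "f \<in> X" using fF X(4) by blast
    then have h: "p f \<noteq> f" "p (p f) = f" "R f (p f)" using p unfolding ipm_def by blast+
    have "E f (p f)" using h(3) fF unfolding R_def by blast
    then show ?thesis using h by blast
  qed
  have "matching E M" unfolding matching_def
  proof (intro conjI ballI impI)
    fix e assume "e \<in> M"
    then obtain f where f: "f \<in> F" "e = {f, p f}" by (auto simp: M_def)
    have h: "f \<noteq> p f" "E f (p f)" using pf[OF f(1)] by auto
    show "\<exists>u v. e = {u, v} \<and> u \<noteq> v \<and> E u v"
      by (rule exI[where x=f], rule exI[where x="p f"]) (use f(2) h in simp)
  next
    fix e1 e2 assume e1: "e1 \<in> M" and e2: "e2 \<in> M" and ne: "e1 \<noteq> e2"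
    obtain f where f: "f \<in> F" "e1 = {f, p f}" using e1 by (auto simp: M_def)
    obtain g where gg: "g \<in> F" "e2 = {g, p g}" using e2 by (auto simp: M_def)
    have fX: "f \<in> X" and gX: "g \<in> X" using f gg X(4) by auto
    have pf2: "p (p f) = f" and pg2: "p (p g) = g" using p fX gX by (auto simp: ipm_def)
    show "e1 \<inter> e2 = {}"
    proof (rule ccontr)
      assume "e1 \<inter> e2 \<noteq> {}"
      then obtain t where t: "t \<in> e1" "t \<in> e2" by blast
      have t1: "t = f \<or> t = p f" using t(1) f(2) by simp
      have t2: "t = g \<or> t = p g" using t(2) gg(2) by simp
      have "f = g \<or> f = p g"
      proof (cases "t = f")
        case True then show ?thesis using t2 by blast
      next
        case False
        then have tf: "t = p f" using t1 by blast
        show ?thesis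
        proof (cases "t = g")
          case True
          then have "p f = g" using tf by simp
          then have "p (p f) = p g" by simp
          then show ?thesis using pf2 by simp
        next
          case False
          then have "p f = p g" using tf t2 by simp
          then have "p (p f) = p (p g)" by simp
          then show ?thesis using pf2 pg2 by simp
        qed
      qed
      then have "e1 = e2"
      proof
        assume "f = g" then show ?thesis using f gg by simp
      next
        assume fg: "f = p g"
        then have "p f = g" using pg2 by simp
        then show ?thesis using f gg fg by (simp add: insert_commute)
      qed
      then show False using ne by simp
    qed
  qed
  moreover have "covers M F" unfolding covers_def M_def by blast
  ultimately show ?thesis by blast
qed

end

theorem main_thm:
  fixes V :: "'a set" and E :: "'a \<Rightarrow> 'a \<Rightarrow> bool"
  assumes g: "graph V E"
    and cV: "countable V" and infV: "infinite V"
    and conn: "connected_graph V E"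
    and vt: "vertex_transitive V E"
  shows "\<exists>M. perfect_matching V E M"
proof (cases "\<exists>v\<in>V. infinite (nbr E v)")
  case True
  then obtain v where v: "v \<in> V" "infinite (nbr E v)" by blast
  have "infinite (nbr E x)" if x: "x \<in> V" for x
  proof -
    obtain f where f: "graph_automorphism V E f" "f v = x" using vt v(1) x by (auto simp: vertex_transitive_def)
    show ?thesis using aut_card_nbr(2)[OF g f(1) v(1)] f(2) v(2) by simp
  qed
  then show ?thesis by (rule greedy_pm[OF g cV])
next
  case False
  then have lf: "\<And>v. v \<in> V \<Longrightarrow> finite (nbr E v)" by blast
  obtain v where v: "v \<in> V" using infV by (metis finite.emptyI ex_in_conv)
  define d where "d = card (nbr E v)"
  have reg: "card (nbr E x) = d" if x: "x \<in> V" for x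
  proof -
    obtain f where f: "graph_automorphism V E f" "f v = x" using vt v x by (auto simp: vertex_transitive_def)
    show ?thesis using aut_card_nbr(1)[OF g f(1) v] f(2) by (simp add: d_def)
  qed
  interpret vtlf V E d by (unfold_locales) (use g conn vt infV lf reg in auto)
  show ?thesis by (rule compact_pm[OF g cV lf cover]) auto
qed

theorem theorem1p2:
  fixes V :: "'a set" and E :: "'a \<Rightarrow> 'a \<Rightarrow> bool"
  assumes "graph V E"
    and "countable V" and "infinite V"
    and "connected_graph V E"
    and "vertex_transitive V E"
  shows "\<exists>M. perfect_matching V E M"
  using main_thm[OF assms] .

end
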